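(* $\mathfrak{d}_{\mathrm{game}}^{\mathrm{I}} = \mathfrak{d}_{\mathrm{game}}^{\mathrm{II}} = \mathfrak{d}_{\mathrm{game}^*}^{\mathrm{I}} = \mathfrak{d}$ and $\mathfrak{d}_{\mathrm{game}^*}^{\mathrm{II}} = \mathfrak{c}$.
   Context: For $x,y\in\omega^\omega$, $x\le^* y$ means $x(n)\le y(n)$ for all but finitely many $n$. $\mathfrak{d}$ is the least size of a family $\mathcal{A}\subseteq\omega^\omega$ such that every $x\in\omega^\omega$ satisfies $x\le^* y$ for some $y\in\mathcal{A}$; $\mathfrak{c}=2^{\aleph_0}$. For $\mathcal{A}\subseteq\omega^\omega$, the dominating game with respect to $\mathcal{A}$: at round $k$, Player I plays $n_k\in\omega$ and then Player II plays $i_k\in\{0,1\}$; Player II wins iff $i_k=1$ for all but finitely many $k$ and there is $g\in\mathcal{A}$ with $\{k: i_k=1\}=\{k: n_k<g(k)\}$. The dominating* game with respect to $\mathcal{A}$: at round $k$, Player I plays $n_k\in\omega$ and then Player II plays $m_k\in\omega$; Player II wins iff $\langle m_k:k\in\omega\rangle\in\mathcal{A}$ and $n_k<m_k$ for all but finitely many $k$. $\mathfrak{d}_{\mathrm{game}}^{\mathrm{I}}$ (resp. $\mathfrak{d}_{\mathrm{game}^*}^{\mathrm{I}}$) is the least $|\mathcal{A}|$ such that Player I has no winning strategy in the dominating (resp. dominating* ) game with respect to $\mathcal{A}$; $\mathfrak{d}_{\mathrm{game}}^{\mathrm{II}}$ (resp. $\mathfrak{d}_{\mathrm{game}^*}^{\mathrm{II}}$)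 is the least $|\mathcal{A}|$ such that Player II has a winning strategy in the dominating (resp. dominating* ) game with respect to $\mathcal{A}$. *)

theory Defs
  imports Main
begin

type_synonym baire = "nat \<Rightarrow> nat"

definition le_star :: "baire \<Rightarrow> baire \<Rightarrow> bool" where
  "le_star x y \<longleftrightarrow> finite {n. \<not> x n \<le> y n}"

definition dominating :: "baire set \<Rightarrow> bool" where
  "dominating A \<longleftrightarrow> (\<forall>x. \<exists>y\<in>A. le_star x y)"

text \<open>Dominating game. Plays: n = moves of Player I, i = moves of Player II.\<close>
definition dom_game_II_wins :: "baire set \<Rightarrow> baire \<Rightarrow> (nat \<Rightarrow> bool) \<Rightarrow> bool" where
  "dom_game_II_wins A n i \<longleftrightarrow>
     finite {k. \<not> i k} \<and> (\<exists>g\<in>A. {k. i k} = {k. n k < g k})"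

text \<open>Strategies: Player I sees the previous moves of Player II;
  Player II sees the moves of Player I so far (including the current one).\<close>
definition dom_game_I_has_ws :: "baire set \<Rightarrow> bool" where
  "dom_game_I_has_ws A \<longleftrightarrow> (\<exists>\<sigma> :: bool list \<Rightarrow> nat.
     \<forall>i :: nat \<Rightarrow> bool. \<not> dom_game_II_wins A (\<lambda>k. \<sigma> (map i [0..<k])) i)"

definition dom_game_II_has_ws :: "baire set \<Rightarrow> bool" where
  "dom_game_II_has_ws A \<longleftrightarrow> (\<exists>\<tau> :: nat list \<Rightarrow> bool.
     \<forall>n :: baire. dom_game_II_wins A n (\<lambda>k. \<tau> (map n [0..<Suc k])))"

definition domstar_game_II_wins :: "baire set \<Rightarrow> baire \<Rightarrow> baire \<Rightarrow> bool" where
  "domstar_game_II_wins A n m \<longleftrightarrow> m \<in> A \<and> finite {k. \<not> n k < m k}"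

definition domstar_game_I_has_ws :: "baire set \<Rightarrow> bool" where
  "domstar_game_I_has_ws A \<longleftrightarrow> (\<exists>\<sigma> :: nat list \<Rightarrow> nat.
     \<forall>m :: baire. \<not> domstar_game_II_wins A (\<lambda>k. \<sigma> (map m [0..<k])) m)"

definition domstar_game_II_has_ws :: "baire set \<Rightarrow> bool" where
  "domstar_game_II_has_ws A \<longleftrightarrow> (\<exists>\<tau> :: nat list \<Rightarrow> nat.
     \<forall>n :: baire. domstar_game_II_wins A n (\<lambda>k. \<tau> (map n [0..<Suc k])))"

definition min_witness :: "(baire set \<Rightarrow> bool) \<Rightarrow> baire set \<Rightarrow> bool" where
  "min_witness P A \<longleftrightarrow> P A \<and> (\<forall>B. P B \<longrightarrow> (card_of A, card_of B) \<in> ordLeq)"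

end

theory Submission
  imports Defs "HOL-Library.Countable_Set"
begin

lemma minw_exists:
  assumes "P B0"
  shows "\<exists>A. min_witness P A"
proof -
  let ?Q = "{card_of B | B. P B}"
  have "card_of B0 \<in> ?Q" using assms by blast
  hence "\<exists>z\<in>?Q. \<forall>y. (y, z) \<in> ordLess \<longrightarrow> y \<notin> ?Q"
    by (rule wf_ordLess[unfolded wf_eq_minimal, rule_format])
  then obtain z where z: "z \<in> ?Q" and zmin: "\<forall>y. (y, z) \<in> ordLess \<longrightarrow> y \<notin> ?Q"
    by blast
  then obtain A where zA: "z = card_of A" and PA: "P A" by blast
  have "(card_of A, card_of B) \<in> ordLeq" if "P B" for B
  proof -
    have "(card_of B, card_of A) \<notin> ordLess" using zmin zA that by blast
    thus ?thesis using ordLess_or_ordLeq[OF card_of_Well_order card_of_Well_order] by blast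
  qed
  thus ?thesis using PA unfolding min_witness_def by blast
qed

lemma minw_le: "min_witness P A \<Longrightarrow> P B \<Longrightarrow> (card_of A, card_of B) \<in> ordLeq"
  unfolding min_witness_def by blast

lemma minw_P: "min_witness P A \<Longrightarrow> P A"
  unfolding min_witness_def by blast

lemma dom_infinite:
  assumes "dominating D" shows "infinite D"
proof
  assume fin: "finite D"
  define x where "x = (\<lambda>n. Suc (\<Sum>g\<in>D. g n))"
  obtain g where g: "g \<in> D" "le_star x g" using assms unfolding dominating_def by blast
  have "g n \<le> (\<Sum>g\<in>D. g n)" for n by (rule member_le_sum[OF g(1) _ fin]) simp
  hence "\<forall>n. g n < x n" unfolding x_def by (simp add: le_imp_less_Suc)
  hence "{n. \<not> x n \<le> g n} = UNIV" by (auto simp: not_le)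
  thus False using g(2) unfolding le_star_def by simp
qed

lemma notIws_dom:
  assumes "\<not> dom_game_I_has_ws A" shows "dominating A"
proof (rule ccontr)
  assume "\<not> dominating A"
  then obtain x where x: "\<forall>y\<in>A. \<not> le_star x y" unfolding dominating_def by blast
  have nw: "\<not> dom_game_II_wins A x i" for i
  proof
    assume "dom_game_II_wins A x i"
    then obtain g where fin: "finite {k. \<not> i k}" and g: "g \<in> A" "{k. i k} = {k. x k < g k}"
      unfolding dom_game_II_wins_def by auto
    have "\<forall>k. i k \<longleftrightarrow> x k < g k" using g(2) by (simp add: set_eq_iff)
    hence "{n. \<not> x n \<le> g n} \<subseteq> {k. \<not> i k}" by auto
    hence "le_star x g" unfolding le_star_def using fin finite_subset by blast
    thus False using x g(1) by blast
  qed
  have "dom_game_I_has_ws A" unfolding dom_game_I_has_ws_def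
    by (rule exI[of _ "\<lambda>l. x (length l)"]) (simp add: nw)
  thus False using assms by blast
qed

lemma IIws_dom:
  assumes "dom_game_II_has_ws A" shows "dominating A"
  unfolding dominating_def
proof
  fix x
  obtain \<tau> where "\<forall>n. dom_game_II_wins A n (\<lambda>k. \<tau> (map n [0..<Suc k]))"
    using assms unfolding dom_game_II_has_ws_def by blast
  then obtain g where fin: "finite {k. \<not> \<tau> (map x [0..<Suc k])}" and
    g: "g \<in> A" "{k. \<tau> (map x [0..<Suc k])} = {k. x k < g k}"
    unfolding dom_game_II_wins_def by blast
  have "\<forall>k. \<tau> (map x [0..<Suc k]) \<longleftrightarrow> x k < g k" using g(2) unfolding set_eq_iff mem_Collect_eq by blast
  hence "{n. \<not> x n \<le> g n} \<subseteq> {k. \<not> \<tau> (map x [0..<Suc k])}" by auto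
  hence "le_star x g" unfolding le_star_def using fin finite_subset by blast
  thus "\<exists>y\<in>A. le_star x y" using g(1) by blast
qed

lemma notstarIws_dom:
  assumes "\<not> domstar_game_I_has_ws A" shows "dominating A"
proof (rule ccontr)
  assume "\<not> dominating A"
  then obtain x where x: "\<forall>y\<in>A. \<not> le_star x y" unfolding dominating_def by blast
  have nw: "\<not> domstar_game_II_wins A x m" for m
  proof
    assume "domstar_game_II_wins A x m"
    hence m: "m \<in> A" "finite {k. \<not> x k < m k}" unfolding domstar_game_II_wins_def by auto
    have "{n. \<not> x n \<le> m n} \<subseteq> {k. \<not> x k < m k}" by auto
    hence "le_star x m" unfolding le_star_def using m finite_subset by blast
    thus False using x m by blast
  qed
  have "domstar_game_I_has_ws A" unfolding domstar_game_I_has_ws_def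
    by (rule exI[of _ "\<lambda>l. x (length l)"]) (simp add: nw)
  thus False using assms by blast
qed

lemma starIIws_dom:
  assumes "domstar_game_II_has_ws A" shows "dominating A"
  unfolding dominating_def
proof
  fix x
  obtain \<tau> where "\<forall>n. domstar_game_II_wins A n (\<lambda>k. \<tau> (map n [0..<Suc k]))"
    using assms unfolding domstar_game_II_has_ws_def by blast
  hence m: "(\<lambda>k. \<tau> (map x [0..<Suc k])) \<in> A" "finite {k. \<not> x k < \<tau> (map x [0..<Suc k])}"
    unfolding domstar_game_II_wins_def by auto
  have "{n. \<not> x n \<le> \<tau> (map x [0..<Suc n])} \<subseteq> {k. \<not> x k < \<tau> (map x [0..<Suc k])}" by auto
  hence "le_star x (\<lambda>k. \<tau> (map x [0..<Suc k]))" unfolding le_star_def using m finite_subset by blast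
  thus "\<exists>y\<in>A. le_star x y" using m(1) by blast
qed

section \<open>Everywhere dominating family\<close>

definition ED :: "baire set \<Rightarrow> baire set" where
  "ED D = (\<lambda>(g, N, c). \<lambda>k. if k < N then c else Suc (g k)) ` (D \<times> (UNIV :: (nat \<times> nat) set))"

lemma ED_ev:
  assumes "dominating D" shows "\<exists>h\<in>ED D. \<forall>k. x k < h k"
proof -
  obtain g where g: "g \<in> D" "finite {n. \<not> x n \<le> g n}"
    using assms unfolding dominating_def le_star_def by blast
  obtain N where N: "\<forall>n\<in>{n. \<not> x n \<le> g n}. n < N" using g(2) finite_nat_bounded by blast
  define c where "c = Suc (\<Sum>k<N. x k)"
  define h where "h = (\<lambda>k. if k < N then c else Suc (g k))"
  have "h \<in> ED D" unfolding ED_def h_def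
    by (rule image_eqI[where x="(g,N,c)"]) (auto simp: g(1))
  moreover have "x k < h k" for k
  proof (cases "k < N")
    case True
    have "x k \<le> (\<Sum>k<N. x k)" using True by (intro member_le_sum) auto
    thus ?thesis using True unfolding h_def c_def by simp
  next
    case False
    thus ?thesis using N unfolding h_def by force
  qed
  ultimately show ?thesis by blast
qed

lemma nat_sq_le:
  assumes "infinite (D :: 'a set)"
  shows "(card_of (UNIV :: (nat \<times> nat) set), card_of D) \<in> ordLeq"
proof -
  have "(card_of (UNIV :: (nat \<times> nat) set), card_of (UNIV :: nat set)) \<in> ordLeq"
    unfolding card_of_ordLeq[symmetric] by (rule exI[of _ prod_encode]) (simp add: inj_prod_encode)
  moreover have "(card_of (UNIV :: nat set), card_of D) \<in> ordLeq"
    using assms infinite_iff_card_of_nat by blast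
  ultimately show ?thesis using ordLeq_transitive by blast
qed

lemma ED_card:
  assumes "dominating D" shows "(card_of (ED D), card_of D) \<in> ordLeq"
proof -
  have inf: "infinite D" using dom_infinite assms by blast
  have "(card_of (ED D), card_of (D \<times> (UNIV :: (nat \<times> nat) set))) \<in> ordLeq"
    unfolding ED_def by (rule card_of_image)
  moreover have "(card_of (D \<times> (UNIV :: (nat \<times> nat) set)), card_of D) \<in> ordIso"
    using card_of_Times_infinite_simps(1)[OF inf _ nat_sq_le[OF inf]] by simp
  ultimately show ?thesis using ordLeq_ordIso_trans by blast
qed

lemma ED_notIws:
  assumes "dominating D" shows "\<not> dom_game_I_has_ws (ED D)"
  unfolding dom_game_I_has_ws_def
proof
  assume "\<exists>\<sigma>. \<forall>i. \<not> dom_game_II_wins (ED D) (\<lambda>k. \<sigma> (map i [0..<k])) i"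
  then obtain \<sigma> where s: "\<forall>i. \<not> dom_game_II_wins (ED D) (\<lambda>k. \<sigma> (map i [0..<k])) i" by blast
  obtain h where h: "h \<in> ED D" "\<forall>k. \<sigma> (map (\<lambda>_. True) [0..<k]) < h k"
    using ED_ev[OF assms, of "\<lambda>k. \<sigma> (map (\<lambda>_. True) [0..<k])"] by blast
  have "dom_game_II_wins (ED D) (\<lambda>k. \<sigma> (map (\<lambda>_. True) [0..<k])) (\<lambda>_. True)"
    unfolding dom_game_II_wins_def using h by auto
  thus False using s by blast
qed

lemma ED_IIws:
  assumes "dominating D" shows "dom_game_II_has_ws (ED D)"
  unfolding dom_game_II_has_ws_def
proof (intro exI[of _ "\<lambda>_. True"] allI)
  fix n
  obtain h where h: "h \<in> ED D" "\<forall>k. n k < h k" using ED_ev[OF assms] by blast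
  show "dom_game_II_wins (ED D) n (\<lambda>k. True)"
    unfolding dom_game_II_wins_def using h by auto
qed


section \<open>Dominating* game, Player I\<close>

fun pl :: "baire \<Rightarrow> nat \<Rightarrow> nat list" where
  "pl g 0 = []"
| "pl g (Suc k) = pl g k @ [Suc (g (to_nat (pl g k)))]"

definition mg :: "baire \<Rightarrow> baire" where
  "mg g k = Suc (g (to_nat (pl g k)))"

lemma pl_length: "length (pl g k) = k"
  by (induction k) auto

lemma pl_map: "map (mg g) [0..<k] = pl g k"
  by (induction k) (auto simp: mg_def)

lemma mg_notIws:
  assumes "dominating D" shows "\<not> domstar_game_I_has_ws (mg ` D)"
  unfolding domstar_game_I_has_ws_def
proof
  assume "\<exists>\<sigma>. \<forall>m. \<not> domstar_game_II_wins (mg ` D) (\<lambda>k. \<sigma> (map m [0..<k])) m"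
  then obtain \<sigma> where s: "\<forall>m. \<not> domstar_game_II_wins (mg ` D) (\<lambda>k. \<sigma> (map m [0..<k])) m" by blast
  define x where "x = (\<lambda>c. \<sigma> (from_nat c))"
  obtain g where g: "g \<in> D" "finite {n. \<not> x n \<le> g n}"
    using assms unfolding dominating_def le_star_def by blast
  have sub: "{k. \<not> \<sigma> (map (mg g) [0..<k]) < mg g k} \<subseteq> (\<lambda>k. to_nat (pl g k)) -` {n. \<not> x n \<le> g n}"
    by (auto simp: pl_map mg_def x_def)
  have "inj (\<lambda>k. to_nat (pl g k))"
    by (rule injI) (metis pl_length to_nat_split)
  hence "finite ((\<lambda>k. to_nat (pl g k)) -` {n. \<not> x n \<le> g n})"
    by (rule finite_vimageI[OF g(2)])
  hence "finite {k. \<not> \<sigma> (map (mg g) [0..<k]) < mg g k}" using sub finite_subset by blast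
  hence "domstar_game_II_wins (mg ` D) (\<lambda>k. \<sigma> (map (mg g) [0..<k])) (mg g)"
    unfolding domstar_game_II_wins_def using g(1) by blast
  thus False using s by blast
qed

section \<open>Dominating* game, Player II\<close>

fun pre :: "(nat list \<Rightarrow> nat) \<Rightarrow> (nat \<Rightarrow> bool) \<Rightarrow> nat \<Rightarrow> nat list" where
  "pre \<tau> b 0 = []"
| "pre \<tau> b (Suc k) = pre \<tau> b k @ [if b k then \<tau> (pre \<tau> b k @ [0]) else 0]"

definition nb :: "(nat list \<Rightarrow> nat) \<Rightarrow> (nat \<Rightarrow> bool) \<Rightarrow> baire" where
  "nb \<tau> b k = (if b k then \<tau> (pre \<tau> b k @ [0]) else 0)"

lemma nb_map: "map (nb \<tau> b) [0..<k] = pre \<tau> b k"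
  by (induction k) (auto simp: nb_def)

lemma pre_eq: "(\<forall>j<k. b j = b' j) \<Longrightarrow> pre \<tau> b k = pre \<tau> b' k"
  by (induction k) auto

lemma starII_lower:
  assumes "domstar_game_II_has_ws A"
  shows "(card_of (UNIV :: nat set set), card_of A) \<in> ordLeq"
proof -
  have inf: "infinite A" using dom_infinite starIIws_dom assms by blast
  obtain \<tau> where t: "\<forall>n. domstar_game_II_wins A n (\<lambda>k. \<tau> (map n [0..<Suc k]))"
    using assms unfolding domstar_game_II_has_ws_def by blast
  define mb where "mb = (\<lambda>b k. \<tau> (pre \<tau> b k @ [nb \<tau> b k]))"
  define V where "V = (\<lambda>b. {k. b k \<and> \<not> nb \<tau> b k < mb b k})"
  have win: "mb b \<in> A \<and> finite {k. \<not> nb \<tau> b k < mb b k}" for b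
    using t[rule_format, of "nb \<tau> b"] unfolding domstar_game_II_wins_def mb_def
    by (simp add: nb_map[symmetric])
  have finV: "finite (V b)" for b
  proof -
    have "V b \<subseteq> {k. \<not> nb \<tau> b k < mb b k}" unfolding V_def by auto
    thus ?thesis using win[of b] finite_subset by blast
  qed
  have key: "b k = (mb b k \<noteq> \<tau> (pre \<tau> b k @ [0]) \<or> k \<in> V b)" for b k
    unfolding V_def mb_def nb_def by auto
  define F where "F = (\<lambda>b. (mb b, V b))"
  have injF: "inj F"
  proof (rule injI)
    fix b b' assume "F b = F b'"
    hence e: "mb b = mb b'" "V b = V b'" unfolding F_def by auto
    have "\<forall>j<k. b j = b' j" for k
    proof (induction k)
      case (Suc k)
      have "pre \<tau> b k = pre \<tau> b' k" using Suc pre_eq by blast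
      hence "b k = b' k" using key[of b k] key[of b' k] e by simp
      thus ?case using Suc less_Suc_eq by auto
    qed simp
    thus "b = b'" by blast
  qed
  have "F ` UNIV \<subseteq> A \<times> {V. finite V}" unfolding F_def using win finV by auto
  hence le1: "(card_of (UNIV :: (nat \<Rightarrow> bool) set), card_of (A \<times> {V :: nat set. finite V})) \<in> ordLeq"
    using injF card_of_ordLeq by blast
  have "countable {V :: nat set. finite V}" by (rule countable_Collect_finite)
  then obtain f :: "nat set \<Rightarrow> nat" where "inj_on f {V. finite V}" unfolding countable_def by blast
  hence "(card_of {V :: nat set. finite V}, card_of (UNIV :: nat set)) \<in> ordLeq"
    using card_of_ordLeq by blast
  moreover have "(card_of (UNIV :: nat set), card_of A) \<in> ordLeq"
    using inf infinite_iff_card_of_nat by blast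
  ultimately have c1: "(card_of {V :: nat set. finite V}, card_of A) \<in> ordLeq"
    by (rule ordLeq_transitive)
  have c2: "{V :: nat set. finite V} \<noteq> {}" by blast
  have "(card_of (A \<times> {V :: nat set. finite V}), card_of A) \<in> ordIso"
    by (rule card_of_Times_infinite_simps(1)[OF inf c2 c1])
  hence le2: "(card_of (UNIV :: (nat \<Rightarrow> bool) set), card_of A) \<in> ordLeq"
    using le1 ordLeq_ordIso_trans by blast
  have "(card_of (UNIV :: nat set set), card_of (UNIV :: (nat \<Rightarrow> bool) set)) \<in> ordLeq"
    unfolding card_of_ordLeq[symmetric]
  proof (rule exI[of _ "\<lambda>X k. k \<in> X"], intro conjI)
    show "inj_on (\<lambda>X k. k \<in> X) (UNIV :: nat set set)"
    proof (rule inj_onI)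
      fix X Y :: "nat set" assume "(\<lambda>k. k \<in> X) = (\<lambda>k. k \<in> Y)"
      thus "X = Y" by (metis Collect_mem_eq)
    qed
  qed simp
  thus ?thesis using le2 ordLeq_transitive by blast
qed

lemma baire_le:
  "(card_of (UNIV :: baire set), card_of (UNIV :: nat set set)) \<in> ordLeq"
  unfolding card_of_ordLeq[symmetric]
proof (rule exI[of _ "\<lambda>f. range (\<lambda>k. prod_encode (k, f k))"], intro conjI)
  show "inj_on (\<lambda>f. range (\<lambda>k. prod_encode (k, f k))) UNIV"
  proof (rule inj_onI)
    fix f g :: baire
    assume e: "range (\<lambda>k. prod_encode (k, f k)) = range (\<lambda>k. prod_encode (k, g k))"
    show "f = g"
    proof
      fix k
      have "prod_encode (k, f k) \<in> range (\<lambda>k. prod_encode (k, g k))" using e by blast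
      then obtain j where "prod_encode (k, f k) = prod_encode (j, g j)" by blast
      thus "f k = g k" by (auto simp: prod_encode_eq)
    qed
  qed
qed simp

lemma UNIV_starIIws: "domstar_game_II_has_ws UNIV"
  unfolding domstar_game_II_has_ws_def domstar_game_II_wins_def
  by (rule exI[of _ "\<lambda>s. Suc (last s)"]) simp


lemma mg_card: "(card_of (mg ` D), card_of D) \<in> ordLeq"
  by (rule card_of_image)

lemma UNIV_dom: "dominating UNIV"
  unfolding dominating_def le_star_def
proof
  fix x :: baire
  have "{n. \<not> x n \<le> x n} = {}" by simp
  thus "\<exists>y\<in>UNIV. finite {n. \<not> x n \<le> y n}" by (metis UNIV_I finite.emptyI)
qed

lemma iso_from:
  assumes "(card_of A, card_of D) \<in> ordLeq" "(card_of D, card_of A) \<in> ordLeq"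
  shows "(card_of A, card_of D) \<in> ordIso"
  using assms ordIso_iff_ordLeq by blast

theorem mainTheorem4:
  shows "(\<exists>A. min_witness dominating A)
    \<and> (\<exists>A. min_witness (\<lambda>A. \<not> dom_game_I_has_ws A) A)
    \<and> (\<exists>A. min_witness dom_game_II_has_ws A)
    \<and> (\<exists>A. min_witness (\<lambda>A. \<not> domstar_game_I_has_ws A) A)
    \<and> (\<exists>A. min_witness domstar_game_II_has_ws A)
    \<and> (\<forall>D A. min_witness dominating D \<longrightarrow> min_witness (\<lambda>A. \<not> dom_game_I_has_ws A) A
          \<longrightarrow> (card_of A, card_of D) \<in> ordIso)
    \<and> (\<forall>D A. min_witness dominating D \<longrightarrow> min_witness dom_game_II_has_ws A
          \<longrightarrow> (card_of A, card_of D) \<in> ordIso)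
    \<and> (\<forall>D A. min_witness dominating D \<longrightarrow> min_witness (\<lambda>A. \<not> domstar_game_I_has_ws A) A
          \<longrightarrow> (card_of A, card_of D) \<in> ordIso)
    \<and> (\<forall>A. min_witness domstar_game_II_has_ws A
          \<longrightarrow> (card_of A, card_of (UNIV :: nat set set)) \<in> ordIso)"
proof (intro conjI allI impI)
  show "\<exists>A. min_witness dominating A" by (rule minw_exists[of dominating UNIV, OF UNIV_dom])
  show "\<exists>A. min_witness (\<lambda>A. \<not> dom_game_I_has_ws A) A"
    by (rule minw_exists[of _ "ED UNIV"]) (rule ED_notIws[OF UNIV_dom])
  show "\<exists>A. min_witness dom_game_II_has_ws A"
    by (rule minw_exists[of _ "ED UNIV"]) (rule ED_IIws[OF UNIV_dom])
  show "\<exists>A. min_witness (\<lambda>A. \<not> domstar_game_I_has_ws A) A"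
    by (rule minw_exists[of _ "mg ` UNIV"]) (rule mg_notIws[OF UNIV_dom])
  show "\<exists>A. min_witness domstar_game_II_has_ws A"
    by (rule minw_exists[of domstar_game_II_has_ws UNIV, OF UNIV_starIIws])
next
  fix D A
  assume d: "min_witness dominating D" and a: "min_witness (\<lambda>A. \<not> dom_game_I_has_ws A) A"
  have dD: "dominating D" using minw_P[OF d] .
  have "(card_of A, card_of (ED D)) \<in> ordLeq" using minw_le[OF a] ED_notIws[OF dD] by blast
  hence 1: "(card_of A, card_of D) \<in> ordLeq" using ED_card[OF dD] ordLeq_transitive by blast
  have 2: "(card_of D, card_of A) \<in> ordLeq" using minw_le[OF d] notIws_dom minw_P[OF a] by blast
  show "(card_of A, card_of D) \<in> ordIso" using iso_from[OF 1 2] .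
next
  fix D A
  assume d: "min_witness dominating D" and a: "min_witness dom_game_II_has_ws A"
  have dD: "dominating D" using minw_P[OF d] .
  have "(card_of A, card_of (ED D)) \<in> ordLeq" using minw_le[OF a] ED_IIws[OF dD] by blast
  hence 1: "(card_of A, card_of D) \<in> ordLeq" using ED_card[OF dD] ordLeq_transitive by blast
  have 2: "(card_of D, card_of A) \<in> ordLeq" using minw_le[OF d] IIws_dom minw_P[OF a] by blast
  show "(card_of A, card_of D) \<in> ordIso" using iso_from[OF 1 2] .
next
  fix D A
  assume d: "min_witness dominating D" and a: "min_witness (\<lambda>A. \<not> domstar_game_I_has_ws A) A"
  have dD: "dominating D" using minw_P[OF d] .
  have "(card_of A, card_of (mg ` D)) \<in> ordLeq" using minw_le[OF a] mg_notIws[OF dD] by blast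
  hence 1: "(card_of A, card_of D) \<in> ordLeq" using mg_card ordLeq_transitive by blast
  have 2: "(card_of D, card_of A) \<in> ordLeq" using minw_le[OF d] notstarIws_dom minw_P[OF a] by blast
  show "(card_of A, card_of D) \<in> ordIso" using iso_from[OF 1 2] .
next
  fix A
  assume a: "min_witness domstar_game_II_has_ws A"
  have "(card_of A, card_of (UNIV :: baire set)) \<in> ordLeq" using minw_le[OF a UNIV_starIIws] .
  hence 1: "(card_of A, card_of (UNIV :: nat set set)) \<in> ordLeq" using baire_le ordLeq_transitive by blast
  have 2: "(card_of (UNIV :: nat set set), card_of A) \<in> ordLeq" using starII_lower minw_P[OF a] by blast
  show "(card_of A, card_of (UNIV :: nat set set)) \<in> ordIso" using iso_from[OF 1 2] .
qed

end
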